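(* Let $n\ge1$ and $Q\in\mathcal{Q}_n$. Then $Q$ is meet-irreducible in $(\mathcal{Q}_n,\le)$ if and only if $Q\in\mathcal{P}_n$ and $Q=Q(w)$ where $w\in S_n$ is of the form $w=w(i_1,i_2,i_3,i_4)$ for some integers $i_1,i_4\ge0$, $i_2,i_3\ge1$ with $i_1+i_2+i_3+i_4=n$. In particular, no proper quasi-copula (element of $\mathcal{Q}_n\setminus\mathcal{P}_n$) is meet-irreducible in $\mathcal{Q}_n$.
   Context: Fix $n\ge1$, $L_n=\{0,\dots,n\}$. $\mathcal{Q}_n$ is the set of irreducible discrete quasi-copulas: maps $Q:L_n\times L_n\to L_n$ (onto) with $Q(i,0)=Q(0,i)=0$, $Q(i,n)=Q(n,i)=i$, non-decreasing in each argument, and $Q(i,j)+Q(i',j')\ge Q(i,j')+Q(i',j)$ whenever $i\le i'$, $j\le j'$ and one of $i,i',j,j'$ lies in $\{0,n\}$. $\mathcal{P}_n\subseteq\mathcal{Q}_n$ is the subset of those satisfying this inequality for all $i\le i'$, $j\le j'$ (irreducible discrete copulas). Order: $P\le Q$ iff $P(i,j)\le Q(i,j)$ for all $i,j$. For $w\in S_n$, $Q(w)(r,s)=|\{i\le r: w(i)\le s\}|$ (and $0$ if $r=0$ or $s=0$); every element of $\mathcal{P}_n$ is $Q(w)$ for a unique $w$. An element $z$ of a finite poset $P$ is meet-irreducible if $z$ is not the maximum of $P$ and $z=x\wedge y$ implies $z=x$ or $z=y$. For integers $i_1,i_4\ge0$, $i_2,i_3\ge1$ with $i_1+i_2+i_3+i_4=n$,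 $w(i_1,i_2,i_3,i_4)\in S_n$ is defined by $w(i)=i$ for $1\le i\le i_1$, $w(i)=i+i_3$ for $i_1+1\le i\le i_1+i_2$, $w(i)=i-i_2$ for $i_1+i_2+1\le i\le i_1+i_2+i_3$, and $w(i)=i$ for $i_1+i_2+i_3+1\le i\le n$. *)

theory Defs
  imports "HOL-Combinatorics.Permutations"
begin

text \<open>Discrete quasi-copulas on L_n = {0..n} are represented as functions
  nat \<Rightarrow> nat \<Rightarrow> nat, normalised to be 0 outside L_n \<times> L_n so that
  extensional equality agrees with equality of maps L_n \<times> L_n \<rightarrow> L_n.\<close>

definition quasi_copulas :: "nat \<Rightarrow> (nat \<Rightarrow> nat \<Rightarrow> nat) set" where
  "quasi_copulas n = {Q.
     (\<forall>i j. (i > n \<or> j > n) \<longrightarrow> Q i j = 0) \<and>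
     (\<forall>i\<in>{0..n}. \<forall>j\<in>{0..n}. Q i j \<in> {0..n}) \<and>
     (\<forall>k\<in>{0..n}. \<exists>i\<in>{0..n}. \<exists>j\<in>{0..n}. Q i j = k) \<and>
     (\<forall>i\<in>{0..n}. Q i 0 = 0 \<and> Q 0 i = 0 \<and> Q i n = i \<and> Q n i = i) \<and>
     (\<forall>i\<in>{0..n}. \<forall>i'\<in>{0..n}. \<forall>j\<in>{0..n}. i \<le> i' \<longrightarrow> Q i j \<le> Q i' j \<and> Q j i \<le> Q j i') \<and>
     (\<forall>i\<in>{0..n}. \<forall>i'\<in>{0..n}. \<forall>j\<in>{0..n}. \<forall>j'\<in>{0..n}.
        i \<le> i' \<and> j \<le> j' \<and> (i \<in> {0, n} \<or> i' \<in> {0, n} \<or> j \<in> {0, n} \<or> j' \<in> {0, n})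
        \<longrightarrow> Q i j + Q i' j' \<ge> Q i j' + Q i' j)}"

definition copulas :: "nat \<Rightarrow> (nat \<Rightarrow> nat \<Rightarrow> nat) set" where
  "copulas n = {Q \<in> quasi_copulas n.
     \<forall>i\<in>{0..n}. \<forall>i'\<in>{0..n}. \<forall>j\<in>{0..n}. \<forall>j'\<in>{0..n}.
        i \<le> i' \<and> j \<le> j' \<longrightarrow> Q i j + Q i' j' \<ge> Q i j' + Q i' j}"

definition qle :: "(nat \<Rightarrow> nat \<Rightarrow> nat) \<Rightarrow> (nat \<Rightarrow> nat \<Rightarrow> nat) \<Rightarrow> bool" where
  "qle P Q \<longleftrightarrow> (\<forall>i j. P i j \<le> Q i j)"

definition Qw :: "nat \<Rightarrow> (nat \<Rightarrow> nat) \<Rightarrow> nat \<Rightarrow> nat \<Rightarrow> nat" where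
  "Qw n w r s = (if r = 0 \<or> s = 0 \<or> r > n \<or> s > n then 0
                 else card {i \<in> {1..r}. w i \<le> s})"

definition is_meet_in :: "'a set \<Rightarrow> ('a \<Rightarrow> 'a \<Rightarrow> bool) \<Rightarrow> 'a \<Rightarrow> 'a \<Rightarrow> 'a \<Rightarrow> bool" where
  "is_meet_in S le z x y \<longleftrightarrow> z \<in> S \<and> le z x \<and> le z y \<and>
     (\<forall>u\<in>S. le u x \<and> le u y \<longrightarrow> le u z)"

definition is_max_in :: "'a set \<Rightarrow> ('a \<Rightarrow> 'a \<Rightarrow> bool) \<Rightarrow> 'a \<Rightarrow> bool" where
  "is_max_in S le z \<longleftrightarrow> z \<in> S \<and> (\<forall>u\<in>S. le u z)"

definition meet_irreducible :: "'a set \<Rightarrow> ('a \<Rightarrow> 'a \<Rightarrow> bool) \<Rightarrow> 'a \<Rightarrow> bool" where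
  "meet_irreducible S le z \<longleftrightarrow> z \<in> S \<and> \<not> is_max_in S le z \<and>
     (\<forall>x\<in>S. \<forall>y\<in>S. is_meet_in S le z x y \<longrightarrow> z = x \<or> z = y)"

definition w4 :: "nat \<Rightarrow> nat \<Rightarrow> nat \<Rightarrow> nat \<Rightarrow> nat \<Rightarrow> nat" where
  "w4 i1 i2 i3 i4 i =
     (if i1 + 1 \<le> i \<and> i \<le> i1 + i2 then i + i3
      else if i1 + i2 + 1 \<le> i \<and> i \<le> i1 + i2 + i3 then i - i2
      else i)"

end

theory Submission
  imports Defs
begin

lemma step_aux: "min (min (Suc r) s) (i1 + x' + y) =
  min (min r s) (i1 + x + y) + (if W \<le> s then 1 else 0)"
  if "Suc r \<le> i1+i2+i3+i4" "1 \<le> s" "s \<le> i1+i2+i3+i4" "1 \<le> i2" "1 \<le> i3"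
     "x' = Suc r - (i1+i2)" "x = r - (i1+i2)" "y = s - (i1+i3)"
     "W = w4 i1 i2 i3 i4 (Suc r)"
  for r s i1 i2 i3 i4 x x' y W :: nat
proof -
  have S: "(s \<le> i1 + i3 \<and> y = 0) \<or> (\<exists>t. s = i1+i3+t \<and> y = t)" using that by (cases "s \<le> i1+i3") auto
  have s1: "1 \<le> s" by fact
  consider "Suc r \<le> i1" | "i1 < Suc r \<and> Suc r \<le> i1 + i2" | "i1+i2 < Suc r \<and> Suc r \<le> i1+i2+i3" | "i1+i2+i3 < Suc r" by linarith
  then show ?thesis
  proof cases
    case 1 then obtain u where u: "i1 = Suc r + u" by (auto simp: le_iff_add)
    have "W = Suc r" "x = 0" "x' = 0" using that 1 unfolding w4_def by auto
    moreover have "min (min (Suc r) s) (Suc r + (u + y)) = min (min r s) (Suc r + (u + y)) + (if Suc r \<le> s then 1 else 0)"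
      by (cases "Suc r \<le> s") (simp_all add: min_def)
    ultimately show ?thesis using u by (simp add: add.assoc)
  next
    case 2 then have "i1 \<le> r" by simp
    then obtain u where u0: "r = i1+u" by (auto simp: le_iff_add)
    then have u: "r = i1+u" "u < i2" using 2 by auto
    then have "W = Suc r + i3" "x = 0" "x' = 0" using that unfolding w4_def by auto
    then show ?thesis using S s1 u by (elim disjE exE conjE) (simp_all add: min_def split: if_split)
  next
    case 3 then have "i1 + i2 \<le> r" by simp
    then obtain u where u0: "r = i1+i2+u" by (auto simp: le_iff_add)
    then have u: "r = i1+i2+u" "u < i3" using 3 by auto
    then have "W = i1 + Suc u" "x' = Suc u" "x = u" using that unfolding w4_def by auto
    then show ?thesis using S s1 u by (elim disjE exE conjE) (simp_all add: min_def split: if_split)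
  next
    case 4 then have "i1 + i2 + i3 \<le> r" by simp
    then obtain u where u: "r = i1+i2+i3+u" by (auto simp: le_iff_add)
    then have "W = Suc r" "x' = Suc (i3+u)" "x = i3+u" using that unfolding w4_def by auto
    then show ?thesis using S s1 u by (elim disjE exE conjE) (simp_all add: min_def split: if_split)
  qed
qed

definition Fq :: "nat \<Rightarrow> nat \<Rightarrow> nat \<Rightarrow> nat \<Rightarrow> nat \<Rightarrow> nat \<Rightarrow> nat" where
"Fq n a b v i j = (if i \<le> n \<and> j \<le> n then min (min i j) (v + (i - a) + (j - b)) else 0)"

lemma card_Suc_split: "card {k \<in> {1..Suc r}. P k} = card {k \<in> {1..r}. P k} + (if P (Suc r) then 1 else 0)"
proof -
  have e: "{k \<in> {1..Suc r}. P k} = {k \<in> {1..r}. P k} \<union> {k. k = Suc r \<and> P k}" by auto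
  have "card ({k \<in> {1..r}. P k} \<union> {k. k = Suc r \<and> P k}) = card {k \<in> {1..r}. P k} + card {k. k = Suc r \<and> P k}"
    by (rule card_Un_disjoint) auto
  moreover have "{k. k = Suc r \<and> P k} = (if P (Suc r) then {Suc r} else {})" by auto
  then have "card {k. k = Suc r \<and> P k} = (if P (Suc r) then 1 else 0)" by simp
  ultimately show ?thesis using e by simp
qed

lemma card_w4: "r \<le> i1+i2+i3+i4 \<Longrightarrow> 1 \<le> s \<Longrightarrow> s \<le> i1+i2+i3+i4 \<Longrightarrow> 1 \<le> i2 \<Longrightarrow> 1 \<le> i3 \<Longrightarrow>
  card {k \<in> {1..r}. w4 i1 i2 i3 i4 k \<le> s} = min (min r s) (i1 + (r - (i1+i2)) + (s - (i1+i3)))"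
proof (induction r)
  case 0 then show ?case by simp
next
  case (Suc r)
  then show ?case unfolding card_Suc_split
    by (subst step_aux[OF Suc.prems(1-5) refl refl refl refl]) simp
qed

lemma Qw_w4: assumes "n = i1+i2+i3+i4" "1 \<le> i2" "1 \<le> i3"
  shows "Qw n (w4 i1 i2 i3 i4) = Fq n (i1+i2) (i1+i3) i1"
proof (intro ext)
  fix r s
  show "Qw n (w4 i1 i2 i3 i4) r s = Fq n (i1+i2) (i1+i3) i1 r s"
  proof (cases "r = 0 \<or> s = 0 \<or> r > n \<or> s > n")
    case True then show ?thesis unfolding Qw_def Fq_def by auto
  next
    case False then show ?thesis unfolding Qw_def Fq_def using card_w4[of r i1 i2 i3 i4 s] assms by auto
  qed
qed

lemma w4_inv: "w4 i1 i3 i2 i4 (w4 i1 i2 i3 i4 x) = x"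
  unfolding w4_def by auto

lemma w4_perm: assumes "n = i1+i2+i3+i4"
  shows "w4 i1 i2 i3 i4 permutes {1..n}"
  unfolding permutes_def
proof (intro conjI allI impI)
  fix x assume "x \<notin> {1..n}" then show "w4 i1 i2 i3 i4 x = x" using assms unfolding w4_def by auto
next
  fix y show "\<exists>!x. w4 i1 i2 i3 i4 x = y"
    by (rule ex1I[of _ "w4 i1 i3 i2 i4 y"]) (metis w4_inv)+
qed

lemma Qw_cong: "(\<forall>i\<in>{1..n}. w i = w' i) \<Longrightarrow> Qw n w = Qw n w'"
  unfolding Qw_def by (intro ext) (auto intro!: arg_cong[where f=card])

lemma card_split_range: "x \<le> x' \<Longrightarrow> card {k \<in> {1..x'}. P k} = card {k \<in> {1..x}. P k} + card {k \<in> {Suc x..x'}. P k}"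
proof -
  assume "x \<le> x'"
  then have e: "{k \<in> {1..x'}. P k} = {k \<in> {1..x}. P k} \<union> {k \<in> {Suc x..x'}. P k}" by auto
  show ?thesis unfolding e by (rule card_Un_disjoint) auto
qed

lemma Qw_2inc: assumes "i \<le> i'" "j \<le> j'" "i' \<le> n" "j' \<le> n"
  shows "Qw n w i j' + Qw n w i' j \<le> Qw n w i j + Qw n w i' j'"
proof -
  have mono: "card {k \<in> A. w k \<le> j} \<le> card {k \<in> A. w k \<le> j'}" if "finite A" for A
    by (rule card_mono) (use that assms in auto)
  show ?thesis
  proof (cases "i = 0 \<or> j = 0")
    case True
    have m2: "card {k \<in> {1..i}. w k \<le> j'} \<le> card {k \<in> {1..i'}. w k \<le> j'}"
      by (rule card_mono) (use assms in auto)
    show ?thesis unfolding Qw_def using mono[of "{1..i'}"] m2 True assms by auto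
  next
    case False
    then have "i' \<noteq> 0" "j' \<noteq> 0" using assms by auto
    then show ?thesis unfolding Qw_def using False assms
        card_split_range[OF assms(1), of "\<lambda>k. w k \<le> j"] card_split_range[OF assms(1), of "\<lambda>k. w k \<le> j'"]
        mono[of "{Suc i..i'}"] by auto
  qed
qed

lemma qc_intro:
  assumes z: "\<And>i j. (i > n \<or> j > n) \<Longrightarrow> Q i j = 0"
    and bd: "\<And>i. i \<le> n \<Longrightarrow> Q i 0 = 0 \<and> Q 0 i = 0 \<and> Q i n = i \<and> Q n i = i"
    and m1: "\<And>i i' j. i \<le> i' \<Longrightarrow> i' \<le> n \<Longrightarrow> j \<le> n \<Longrightarrow> Q i j \<le> Q i' j"
    and m2: "\<And>i i' j. i \<le> i' \<Longrightarrow> i' \<le> n \<Longrightarrow> j \<le> n \<Longrightarrow> Q j i \<le> Q j i'"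
    and l1: "\<And>i i' j. i \<le> i' \<Longrightarrow> i' \<le> n \<Longrightarrow> j \<le> n \<Longrightarrow> Q i' j + i \<le> Q i j + i'"
    and l2: "\<And>i i' j. i \<le> i' \<Longrightarrow> i' \<le> n \<Longrightarrow> j \<le> n \<Longrightarrow> Q j i' + i \<le> Q j i + i'"
  shows "Q \<in> quasi_copulas n"
  unfolding quasi_copulas_def
proof (intro CollectI conjI ballI allI impI)
  fix i j assume "n < i \<or> n < j" then show "Q i j = 0" using z by auto
next
  fix i j assume "i \<in> {0..n}" "j \<in> {0..n}"
  then have "Q i j \<le> Q n j" using m1 by auto
  then show "Q i j \<in> {0..n}" using bd \<open>j \<in> {0..n}\<close> by auto
next
  fix k assume "k \<in> {0..n}" then show "\<exists>i\<in>{0..n}. \<exists>j\<in>{0..n}. Q i j = k" using bd by (intro bexI[of _ k] bexI[of _ n]) auto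
next
  fix i assume "i \<in> {0..n}" then show "Q i 0 = 0" "Q 0 i = 0" "Q i n = i" "Q n i = i" using bd by auto
next
  fix i i' j assume "i \<in> {0..n}" "i' \<in> {0..n}" "j \<in> {0..n}" "i \<le> i'"
  then show "Q i j \<le> Q i' j" "Q j i \<le> Q j i'" using m1 m2 by auto
next
  fix i i' j j' assume r: "i \<in> {0..n}" "i' \<in> {0..n}" "j \<in> {0..n}" "j' \<in> {0..n}"
    and h: "i \<le> i' \<and> j \<le> j' \<and> (i \<in> {0, n} \<or> i' \<in> {0, n} \<or> j \<in> {0, n} \<or> j' \<in> {0, n})"
  have A: "Q i' j \<le> Q i' j'" "Q i j \<le> Q i' j" "Q i j' \<le> Q i' j'" "Q i' j' + j \<le> Q i' j + j'"
    "Q i j' + j \<le> Q i j + j'" "Q i' j + i \<le> Q i j + i'" using r h m1 m2 l1 l2 by auto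
  have B: "Q 0 j = 0" "Q 0 j' = 0" "Q i 0 = 0" "Q i' 0 = 0" "Q n j = j" "Q n j' = j'" "Q i n = i" "Q i' n = i'"
    using bd r by auto
  consider "i = 0" | "i = n" | "i' = 0" | "i' = n" | "j = 0" | "j = n" | "j' = 0" | "j' = n" using h by auto
  then show "Q i j' + Q i' j \<le> Q i j + Q i' j'"
  proof cases
    case 1 then show ?thesis using A B by simp
  next
    case 2 then have "i' = n" using h r by auto
    then show ?thesis using 2 by simp
  next
    case 3 then have "i = 0" using h by auto
    then show ?thesis using 3 by simp
  next
    case 4 then show ?thesis using A B h by simp
  next
    case 5 then show ?thesis using A B by simp
  next
    case 6 then have "j' = n" using h r by auto
    then show ?thesis using 6 by simp
  next
    case 7 then have "j = 0" using h by auto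
    then show ?thesis using 7 by simp
  next
    case 8 then show ?thesis using A B h by simp
  qed
qed

lemma qc_props:
  assumes "Q \<in> quasi_copulas n"
  shows "\<And>i j. (i > n \<or> j > n) \<Longrightarrow> Q i j = 0"
    and "\<And>i. i \<le> n \<Longrightarrow> Q i 0 = 0 \<and> Q 0 i = 0 \<and> Q i n = i \<and> Q n i = i"
    and "\<And>i i' j. i \<le> i' \<Longrightarrow> i' \<le> n \<Longrightarrow> j \<le> n \<Longrightarrow> Q i j \<le> Q i' j"
    and "\<And>i i' j. i \<le> i' \<Longrightarrow> i' \<le> n \<Longrightarrow> j \<le> n \<Longrightarrow> Q j i \<le> Q j i'"
    and "\<And>i i' j. i \<le> i' \<Longrightarrow> i' \<le> n \<Longrightarrow> j \<le> n \<Longrightarrow> Q i' j + i \<le> Q i j + i'"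
    and "\<And>i i' j. i \<le> i' \<Longrightarrow> i' \<le> n \<Longrightarrow> j \<le> n \<Longrightarrow> Q j i' + i \<le> Q j i + i'"
    and "\<And>a b. a \<le> n \<Longrightarrow> b \<le> n \<Longrightarrow> a + b \<le> Q a b + n"
proof -
  note D = assms[unfolded quasi_copulas_def, simplified]
  have Rect: "\<And>i i' j j'. i \<le> i' \<Longrightarrow> j \<le> j' \<Longrightarrow> i' \<le> n \<Longrightarrow> j' \<le> n \<Longrightarrow> (i' = n \<or> j' = n) \<Longrightarrow> Q i j' + Q i' j \<le> Q i j + Q i' j'"
  proof -
    fix i i' j j' assume "i \<le> i'" "j \<le> j'" "i' \<le> n" "j' \<le> n" "i' = n \<or> j' = n"
    then show "Q i j' + Q i' j \<le> Q i j + Q i' j'" using D[THEN conjunct2, THEN conjunct2, THEN conjunct2, THEN conjunct2, THEN conjunct2] by auto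
  qed
  show "\<And>i j. (i > n \<or> j > n) \<Longrightarrow> Q i j = 0" using D by auto
  show "\<And>i. i \<le> n \<Longrightarrow> Q i 0 = 0 \<and> Q 0 i = 0 \<and> Q i n = i \<and> Q n i = i" using D by auto
  show "\<And>i i' j. i \<le> i' \<Longrightarrow> i' \<le> n \<Longrightarrow> j \<le> n \<Longrightarrow> Q i j \<le> Q i' j" using D by auto
  show "\<And>i i' j. i \<le> i' \<Longrightarrow> i' \<le> n \<Longrightarrow> j \<le> n \<Longrightarrow> Q j i \<le> Q j i'" using D by auto
  show "\<And>i i' j. i \<le> i' \<Longrightarrow> i' \<le> n \<Longrightarrow> j \<le> n \<Longrightarrow> Q i' j + i \<le> Q i j + i'"
  proof -
    fix i i' j assume h: "i \<le> i'" "i' \<le> n" "j \<le> n"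
    have "Q i j + Q i' n \<ge> Q i n + Q i' j" using Rect[of i i' j n] h by auto
    moreover have "Q i' n = i'" "Q i n = i" using D h by auto
    ultimately show "Q i' j + i \<le> Q i j + i'" using h by linarith
  qed
  show "\<And>i i' j. i \<le> i' \<Longrightarrow> i' \<le> n \<Longrightarrow> j \<le> n \<Longrightarrow> Q j i' + i \<le> Q j i + i'"
  proof -
    fix i i' j assume h: "i \<le> i'" "i' \<le> n" "j \<le> n"
    have "Q j i + Q n i' \<ge> Q j i' + Q n i" using Rect[of j n i i'] h by auto
    moreover have "Q n i' = i'" "Q n i = i" using D h by auto
    ultimately show "Q j i' + i \<le> Q j i + i'" using h by linarith
  qed
  show "\<And>a b. a \<le> n \<Longrightarrow> b \<le> n \<Longrightarrow> a + b \<le> Q a b + n"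
  proof -
    fix a b assume h: "a \<le> n" "b \<le> n"
    have "Q a b + Q n n \<ge> Q a n + Q n b" using Rect[of a n b n] h by auto
    moreover have "Q n n = n" "Q a n = a" "Q n b = b" using D h by auto
    ultimately show "a + b \<le> Q a b + n" by linarith
  qed
qed

lemma min2_lip: "(a'::nat) + c \<le> a + d \<Longrightarrow> b' + c \<le> b + d \<Longrightarrow> min a' b' + c \<le> min a b + d"
  by (simp add: min_def)

lemma min3_lip: "(x'::nat) + c \<le> x + d \<Longrightarrow> y' + c \<le> y + d \<Longrightarrow> z' + c \<le> z + d \<Longrightarrow> min (min x' y') z' + c \<le> min (min x y) z + d"
  by (simp add: min_def)

lemma Fq_qc: assumes "a \<le> n" "b \<le> n" "a + b \<le> v + n"
  shows "Fq n a b v \<in> quasi_copulas n"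
proof (rule qc_intro)
  show "\<And>i j. n < i \<or> n < j \<Longrightarrow> Fq n a b v i j = 0" unfolding Fq_def by auto
  show "\<And>i. i \<le> n \<Longrightarrow> Fq n a b v i 0 = 0 \<and> Fq n a b v 0 i = 0 \<and> Fq n a b v i n = i \<and> Fq n a b v n i = i"
    unfolding Fq_def using assms by (auto simp: min_def)
  show "\<And>i i' j. i \<le> i' \<Longrightarrow> i' \<le> n \<Longrightarrow> j \<le> n \<Longrightarrow> Fq n a b v i j \<le> Fq n a b v i' j"
    unfolding Fq_def by (auto intro!: min.mono diff_le_mono)
  show "\<And>i i' j. i \<le> i' \<Longrightarrow> i' \<le> n \<Longrightarrow> j \<le> n \<Longrightarrow> Fq n a b v j i \<le> Fq n a b v j i'"
    unfolding Fq_def by (auto intro!: min.mono diff_le_mono)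
  show "\<And>i i' j. i \<le> i' \<Longrightarrow> i' \<le> n \<Longrightarrow> j \<le> n \<Longrightarrow> Fq n a b v i' j + i \<le> Fq n a b v i j + i'"
    unfolding Fq_def by (auto intro!: min3_lip)
  show "\<And>i i' j. i \<le> i' \<Longrightarrow> i' \<le> n \<Longrightarrow> j \<le> n \<Longrightarrow> Fq n a b v j i' + i \<le> Fq n a b v j i + i'"
    unfolding Fq_def by (auto intro!: min3_lip)
qed

lemma min_qc: assumes "Q \<in> quasi_copulas n" "R \<in> quasi_copulas n"
  shows "(\<lambda>i j. min (Q i j) (R i j)) \<in> quasi_copulas n"
proof (rule qc_intro)
  note P = qc_props[OF assms(1)] and R = qc_props[OF assms(2)]
  show "\<And>i j. n < i \<or> n < j \<Longrightarrow> min (Q i j) (R i j) = 0" using P(1) R(1) by auto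
  show "\<And>i. i \<le> n \<Longrightarrow> min (Q i 0) (R i 0) = 0 \<and> min (Q 0 i) (R 0 i) = 0 \<and> min (Q i n) (R i n) = i \<and> min (Q n i) (R n i) = i"
    using P(2) R(2) by auto
  show "\<And>i i' j. i \<le> i' \<Longrightarrow> i' \<le> n \<Longrightarrow> j \<le> n \<Longrightarrow> min (Q i j) (R i j) \<le> min (Q i' j) (R i' j)"
    using P(3) R(3) by (meson min.mono)
  show "\<And>i i' j. i \<le> i' \<Longrightarrow> i' \<le> n \<Longrightarrow> j \<le> n \<Longrightarrow> min (Q j i) (R j i) \<le> min (Q j i') (R j i')"
    using P(4) R(4) by (meson min.mono)
  show "\<And>i i' j. i \<le> i' \<Longrightarrow> i' \<le> n \<Longrightarrow> j \<le> n \<Longrightarrow> min (Q i' j) (R i' j) + i \<le> min (Q i j) (R i j) + i'"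
    using P(5) R(5) by (meson min2_lip)
  show "\<And>i i' j. i \<le> i' \<Longrightarrow> i' \<le> n \<Longrightarrow> j \<le> n \<Longrightarrow> min (Q j i') (R j i') + i \<le> min (Q j i) (R j i) + i'"
    using P(6) R(6) by (meson min2_lip)
qed

lemma upper: assumes "Q \<in> quasi_copulas n" "a \<le> n" "b \<le> n" "Q a b \<le> v"
  shows "qle Q (Fq n a b v)"
  unfolding qle_def
proof (intro allI)
  fix i j
  note P = qc_props[OF assms(1)]
  show "Q i j \<le> Fq n a b v i j"
  proof (cases "i \<le> n \<and> j \<le> n")
    case False then show ?thesis using P(1) by auto
  next
    case True
    have "Q i j \<le> Q n j" "Q i j \<le> Q i n" using P(3) P(4) True by auto
    then have 1: "Q i j \<le> i" "Q i j \<le> j" using P(2) True by auto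
    have "Q i j \<le> Q (max i a) j" using P(3) True assms by auto
    also have "\<dots> \<le> Q (max i a) (max j b)" using P(4) True assms by auto
    finally have s1: "Q i j \<le> Q (max i a) (max j b)" .
    have s2: "Q (max i a) (max j b) + a \<le> Q a (max j b) + max i a" using P(5)[of a "max i a" "max j b"] True assms by auto
    have s3: "Q a (max j b) + b \<le> Q a b + max j b" using P(6)[of b "max j b" a] True assms by auto
    have "max i a = a + (i - a)" "max j b = b + (j - b)" by auto
    then have "Q i j \<le> v + (i - a) + (j - b)" using s1 s2 s3 assms(4) by linarith
    then show ?thesis using 1 True unfolding Fq_def by auto
  qed
qed

lemma Fq_top_aux: "min a b \<le> (v::nat) \<Longrightarrow> min (min i j) (v + (i-a) + (j-b)) = min i j"
  by (cases "a \<le> b"; cases "i \<le> a"; cases "j \<le> b"; cases "i \<le> j") (simp_all add: min_def)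

lemma Fq_top: assumes "min a b \<le> v" shows "Fq n a b v = Fq n n n n"
  using assms Fq_top_aux[OF assms] unfolding Fq_def by (intro ext) auto

lemma qle_antisym: "qle x y \<Longrightarrow> qle y x \<Longrightarrow> x = y"
  unfolding qle_def by (intro ext antisym) auto

lemma Fq_at: "a \<le> n \<Longrightarrow> b \<le> n \<Longrightarrow> Fq n a b v a b = min (min a b) v"
  unfolding Fq_def by simp


lemma meet_irr_Fq:
  assumes QS: "Q \<in> quasi_copulas n" and MI: "meet_irreducible (quasi_copulas n) qle Q"
  shows "\<exists>a b. a \<le> n \<and> b \<le> n \<and> Q = Fq n a b (Q a b)"
proof -
  define S where "S = quasi_copulas n"
  define M where "M = Fq n n n n"
  define FQ where "FQ p = Fq n (fst p) (snd p) (Q (fst p) (snd p))" for p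
  define G where "G T = (\<lambda>i j. Min (insert (M i j) ((\<lambda>p. FQ p i j) ` T)))" for T
  define grid where "grid = {0..n} \<times> {0..n}"
  note P = qc_props[OF QS]
  have MS: "M \<in> S" unfolding M_def S_def by (rule Fq_qc) auto
  have Mtop: "qle u M" if "u \<in> S" for u
    unfolding M_def using upper[of u n n n n] that qc_props[of u n] unfolding S_def by auto
  have notQM: "Q \<noteq> M"
  proof
    assume "Q = M"
    then have "is_max_in S qle Q" unfolding is_max_in_def using MS Mtop by auto
    then show False using MI unfolding meet_irreducible_def S_def by auto
  qed
  have FQS: "FQ p \<in> S" if "p \<in> grid" for p
    unfolding FQ_def S_def using that P(7)[of "fst p" "snd p"] unfolding grid_def
    by (intro Fq_qc) (auto simp: mem_Times_iff)
  have QFQ: "qle Q (FQ p)" if "p \<in> grid" for p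
    unfolding FQ_def using that unfolding grid_def by (intro upper[OF QS]) (auto simp: mem_Times_iff)
  have key: "G T \<in> S \<and> qle Q (G T) \<and> (G T = Q \<longrightarrow> (\<exists>p\<in>T. Q = FQ p))"
    if "finite T" "T \<subseteq> grid" for T
    using that
  proof (induction T rule: finite_induct)
    case empty
    have "G {} = M" unfolding G_def by simp
    then show ?case using MS Mtop[OF QS[folded S_def]] notQM by simp
  next
    case (insert p T)
    then have IH: "G T \<in> S" "qle Q (G T)" "G T = Q \<longrightarrow> (\<exists>p\<in>T. Q = FQ p)" and pg: "p \<in> grid" by auto
    have Gi: "G (insert p T) = (\<lambda>i j. min (FQ p i j) (G T i j))"
    proof (intro ext)
      fix i j
      have e: "insert (M i j) ((\<lambda>p. FQ p i j) ` insert p T) = insert (FQ p i j) (insert (M i j) ((\<lambda>p. FQ p i j) ` T))" by auto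
      show "G (insert p T) i j = min (FQ p i j) (G T i j)"
        unfolding G_def e using insert(1) by (subst Min.insert) auto
    qed
    have GS: "G (insert p T) \<in> S" unfolding Gi S_def using FQS[OF pg] IH(1) unfolding S_def by (rule min_qc)
    have Gle: "qle Q (G (insert p T))" unfolding Gi using QFQ[OF pg] IH(2) unfolding qle_def by auto
    have "\<exists>p'\<in>insert p T. Q = FQ p'" if eq: "G (insert p T) = Q"
    proof -
      have "is_meet_in S qle Q (FQ p) (G T)"
        unfolding is_meet_in_def
      proof (intro conjI ballI impI)
        show "Q \<in> S" using QS S_def by simp
        show "qle Q (FQ p)" using QFQ[OF pg] .
        show "qle Q (G T)" using IH(2) .
        fix u assume "u \<in> S" "qle u (FQ p) \<and> qle u (G T)"
        then show "qle u Q" unfolding eq[symmetric] Gi qle_def by auto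
      qed
      then have "Q = FQ p \<or> Q = G T" using MI FQS[OF pg] IH(1) unfolding meet_irreducible_def S_def by blast
      then show ?thesis using IH(3) by auto
    qed
    then show ?case using GS Gle by blast
  qed
  have fg: "finite grid" unfolding grid_def by simp
  note K = key[OF fg order.refl]
  have "qle (G grid) Q" unfolding qle_def
  proof (intro allI)
    fix i j
    show "G grid i j \<le> Q i j"
    proof (cases "i \<le> n \<and> j \<le> n")
      case True
      then have "(i, j) \<in> grid" unfolding grid_def by auto
      then have "G grid i j \<le> FQ (i, j) i j" unfolding G_def using fg by (intro Min_le) auto
      also have "\<dots> \<le> Q i j" unfolding FQ_def Fq_def using True by simp
      finally show ?thesis .
    next
      case False
      have "G grid i j \<le> M i j" unfolding G_def using fg by (intro Min_le) auto
      also have "\<dots> = 0" unfolding M_def Fq_def using False by auto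
      finally show ?thesis by simp
    qed
  qed
  then have "G grid = Q" using K qle_antisym by blast
  then obtain p where "p \<in> grid" "Q = FQ p" using K by blast
  then show ?thesis unfolding FQ_def grid_def by (intro exI[of _ "fst p"] exI[of _ "snd p"]) (auto simp: mem_Times_iff)
qed

theorem mainTheorem5:
  fixes n :: nat and Q :: "nat \<Rightarrow> nat \<Rightarrow> nat"
  assumes "n \<ge> 1" and "Q \<in> quasi_copulas n"
  shows "meet_irreducible (quasi_copulas n) qle Q \<longleftrightarrow>
           (Q \<in> copulas n \<and>
            (\<exists>w. w permutes {1..n} \<and> Q = Qw n w \<and>
               (\<exists>i1 i2 i3 i4 :: nat. i2 \<ge> 1 \<and> i3 \<ge> 1 \<and> i1 + i2 + i3 + i4 = n \<and>
                  (\<forall>i\<in>{1..n}. w i = w4 i1 i2 i3 i4 i))))"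
proof
  assume MI: "meet_irreducible (quasi_copulas n) qle Q"
  note QS = assms(2)
  note P = qc_props[OF QS]
  obtain a b where ab: "a \<le> n" "b \<le> n" "Q = Fq n a b (Q a b)" using meet_irr_Fq[OF QS MI] by blast
  define v where "v = Q a b"
  have lo: "a + b \<le> v + n" using P(7) ab unfolding v_def by auto
  have hi: "v < min a b"
  proof (rule ccontr)
    assume "\<not> v < min a b"
    then have "Q = Fq n n n n" using ab Fq_top unfolding v_def by (metis not_less)
    moreover have "Fq n n n n \<in> quasi_copulas n" by (rule Fq_qc) auto
    moreover have "qle u (Fq n n n n)" if "u \<in> quasi_copulas n" for u
      using upper[of u n n n n] that qc_props[of u n] by auto
    ultimately have "is_max_in (quasi_copulas n) qle Q" unfolding is_max_in_def by auto
    then show False using MI unfolding meet_irreducible_def by auto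
  qed
  define i1 where "i1 = v"
  define i2 where "i2 = a - v"
  define i3 where "i3 = b - v"
  define i4 where "i4 = n + v - a - b"
  have sums: "i1 + i2 = a" "i1 + i3 = b" "i1 + i2 + i3 + i4 = n" "1 \<le> i2" "1 \<le> i3"
    unfolding i1_def i2_def i3_def i4_def using hi lo ab by auto
  define w where "w = w4 i1 i2 i3 i4"
  have "Qw n w = Fq n (i1+i2) (i1+i3) i1" unfolding w_def by (rule Qw_w4[OF sums(3)[symmetric] sums(4,5)])
  then have Qeq: "Q = Qw n w" using sums(1,2) ab(3) unfolding i1_def v_def by simp
  have "Q \<in> copulas n" unfolding copulas_def using QS Qeq Qw_2inc by auto
  moreover have "w permutes {1..n}" unfolding w_def by (rule w4_perm) (use sums in simp)
  ultimately show "Q \<in> copulas n \<and> (\<exists>w. w permutes {1..n} \<and> Q = Qw n w \<and>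
               (\<exists>i1 i2 i3 i4 :: nat. i2 \<ge> 1 \<and> i3 \<ge> 1 \<and> i1 + i2 + i3 + i4 = n \<and>
                  (\<forall>i\<in>{1..n}. w i = w4 i1 i2 i3 i4 i)))"
    using Qeq sums unfolding w_def by blast
next
  assume "Q \<in> copulas n \<and> (\<exists>w. w permutes {1..n} \<and> Q = Qw n w \<and>
               (\<exists>i1 i2 i3 i4 :: nat. i2 \<ge> 1 \<and> i3 \<ge> 1 \<and> i1 + i2 + i3 + i4 = n \<and>
                  (\<forall>i\<in>{1..n}. w i = w4 i1 i2 i3 i4 i)))"
  then obtain w i1 i2 i3 i4 where h: "Q = Qw n w" "i2 \<ge> 1" "i3 \<ge> 1" "i1 + i2 + i3 + i4 = n"
    "\<forall>i\<in>{1..n}. w i = w4 i1 i2 i3 i4 i" by blast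
  note QS = assms(2)
  define a where "a = i1 + i2"
  define b where "b = i1 + i3"
  have ab: "a \<le> n" "b \<le> n" "i1 < a" "i1 < b" using h unfolding a_def b_def by auto
  have QF: "Q = Fq n a b i1" using h Qw_cong[OF h(5)] Qw_w4[OF h(4)[symmetric] h(2,3)] unfolding a_def b_def by simp
  have Qab: "Q a b = i1" using QF Fq_at[OF ab(1,2)] ab by simp
  show "meet_irreducible (quasi_copulas n) qle Q"
    unfolding meet_irreducible_def
  proof (intro conjI ballI impI)
    show "Q \<in> quasi_copulas n" using QS .
    show "\<not> is_max_in (quasi_copulas n) qle Q"
    proof
      assume "is_max_in (quasi_copulas n) qle Q"
      moreover have "Fq n n n n \<in> quasi_copulas n" by (rule Fq_qc) auto
      ultimately have "Fq n n n n a b \<le> Q a b" unfolding is_max_in_def qle_def by auto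
      then show False using Qab ab unfolding Fq_def by auto
    qed
    fix x y assume xS: "x \<in> quasi_copulas n" and yS: "y \<in> quasi_copulas n"
      and m: "is_meet_in (quasi_copulas n) qle Q x y"
    have "qle (\<lambda>i j. min (x i j) (y i j)) Q" using m min_qc[OF xS yS] unfolding is_meet_in_def qle_def by auto
    then have "min (x a b) (y a b) \<le> i1" using Qab unfolding qle_def by metis
    then have "qle x Q \<or> qle y Q" using upper[OF xS ab(1,2), of i1] upper[OF yS ab(1,2), of i1] QF by (metis min_le_iff_disj)
    then show "Q = x \<or> Q = y" using m qle_antisym unfolding is_meet_in_def by blast
  qed
qed

end
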